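(* Let $\chi$ be a regular uncountable cardinal and $\theta>\chi$ a regular cardinal. If $\square_{(\chi,\theta)}$ holds, then $\theta$ has the strong non-reflection property for $\chi$: there is a function $h:\theta\to\chi$ such that for every $\delta<\theta$ with $\mathrm{cf}(\delta)=\chi$ there is a club $C$ of $\delta$ with $h\restriction C$ strictly increasing.
   Context: For cardinals $\chi,\sigma$, $\square_{(\chi,\sigma)}$ is the statement: $\chi<\sigma$ and there is a sequence $\langle C_\delta:\delta$ a limit ordinal with $\mathrm{cf}(\delta)<\delta$ and $\chi<\delta<\sigma\rangle$ such that (1) $C_\delta$ is a club subset of $\delta$, (2) $\mathrm{otp}(C_\delta)<\delta$, (3) if $\delta$ is an accumulation point of $C_\alpha$ then $C_\delta$ is defined and $C_\delta=\delta\cap C_\alpha$. *)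

theory Defs
  imports Main
begin

text \<open>Convention: the regular cardinal theta is represented by a well-ordered type 'a
  whose order type is theta; elements of 'a are the ordinals below theta, ordered by the
  class order. All ordinals mentioned in the statement are below theta.\<close>

definition ordr :: "('a::wellorder) rel" where
  "ordr = {(x, y). x \<le> y}"

definition otp_eq :: "('a::wellorder) set \<Rightarrow> 'a \<Rightarrow> bool" where
  "otp_eq A k \<longleftrightarrow> (Restr ordr A, Restr ordr {..<k}) \<in> ordIso"

definition otp_less :: "('a::wellorder) set \<Rightarrow> 'a \<Rightarrow> bool" where
  "otp_less A k \<longleftrightarrow> (Restr ordr A, Restr ordr {..<k}) \<in> ordLess"

definition cofinal_in :: "('a::wellorder) set \<Rightarrow> 'a \<Rightarrow> bool" where
  "cofinal_in A d \<longleftrightarrow> A \<subseteq> {..<d} \<and> (\<forall>b<d. \<exists>a\<in>A. b \<le> a)"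

definition cof :: "('a::wellorder) \<Rightarrow> 'a" where
  "cof d = (LEAST k. \<exists>A. cofinal_in A d \<and> otp_eq A k)"

definition limit_ord :: "('a::wellorder) \<Rightarrow> bool" where
  "limit_ord d \<longleftrightarrow> (\<exists>b. b < d) \<and> (\<forall>b<d. \<exists>c<d. b < c)"

definition is_cardinal :: "('a::wellorder) \<Rightarrow> bool" where
  "is_cardinal k \<longleftrightarrow> (\<forall>b<k. (card_of {..<b}, card_of {..<k}) \<in> ordLess)"

definition regular_uncountable_cardinal :: "('a::wellorder) \<Rightarrow> bool" where
  "regular_uncountable_cardinal k \<longleftrightarrow>
     is_cardinal k \<and> cof k = k \<and> (card_of (UNIV::nat set), card_of {..<k}) \<in> ordLess"

definition theta_regular_cardinal :: "('a::wellorder) itself \<Rightarrow> bool" where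
  "theta_regular_cardinal TYPE('a) \<longleftrightarrow>
     (\<forall>b::'a. (card_of {..<b}, card_of (UNIV::'a set)) \<in> ordLess) \<and>
     (\<forall>A::'a set. (\<forall>b. \<exists>a\<in>A. b \<le> a) \<longrightarrow> (Restr ordr A, (ordr::'a rel)) \<in> ordIso)"

definition acc_pt :: "('a::wellorder) set \<Rightarrow> 'a \<Rightarrow> bool" where
  "acc_pt C d \<longleftrightarrow> (\<exists>c\<in>C. c < d) \<and> (\<forall>b<d. \<exists>c\<in>C. b < c \<and> c < d)"

definition club_in :: "('a::wellorder) set \<Rightarrow> 'a \<Rightarrow> bool" where
  "club_in C d \<longleftrightarrow> cofinal_in C d \<and> (\<forall>g<d. acc_pt C g \<longrightarrow> g \<in> C)"

definition sq_dom :: "('a::wellorder) \<Rightarrow> 'a \<Rightarrow> bool" where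
  "sq_dom chi d \<longleftrightarrow> limit_ord d \<and> cof d < d \<and> chi < d"

definition square :: "('a::wellorder) \<Rightarrow> bool" where
  "square chi \<longleftrightarrow> (\<exists>C :: 'a \<Rightarrow> 'a set.
     \<forall>a. sq_dom chi a \<longrightarrow>
        club_in (C a) a \<and> otp_less (C a) a \<and>
        (\<forall>d. acc_pt (C a) d \<longrightarrow> sq_dom chi d \<and> C d = C a \<inter> {..<d}))"

definition strong_nonreflection :: "('a::wellorder) \<Rightarrow> bool" where
  "strong_nonreflection chi \<longleftrightarrow> (\<exists>h :: 'a \<Rightarrow> 'a. (\<forall>x. h x < chi) \<and>
     (\<forall>d. cof d = chi \<longrightarrow>
        (\<exists>C. club_in C d \<and> (\<forall>x\<in>C. \<forall>y\<in>C. x < y \<longrightarrow> h x < h y))))"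

end

theory Submission
  imports Defs "HOL-Library.Countable_Set_Type"
begin


lemma Well_order_ordr: "Well_order (ordr :: ('a::wellorder) rel)"
proof -
  have F: "Field (ordr::'a rel) = UNIV" unfolding ordr_def Field_def by auto
  have "Linear_order (ordr::'a rel)"
    unfolding linear_order_on_def partial_order_on_def preorder_on_def refl_on_def
      trans_on_def antisym_on_def total_on_def F
    by (auto simp: ordr_def)
  moreover have "wf ((ordr::'a rel) - Id)"
  proof -
    have "(ordr::'a rel) - Id = {(x,y). x < y}" by (auto simp: ordr_def)
    thus ?thesis using wf by (simp add: wf_def)
  qed
  ultimately show ?thesis unfolding well_order_on_def by simp
qed

lemma WO_Restr: "Well_order (Restr (ordr :: ('a::wellorder) rel) A)"
  by (rule Well_order_Restr[OF Well_order_ordr])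

lemma Field_Restr_ordr: "Field (Restr (ordr :: ('a::wellorder) rel) A) = A"
  unfolding Field_def ordr_def by auto

definition oiso :: "('a::wellorder \<Rightarrow> 'a) \<Rightarrow> 'a \<Rightarrow> 'a set \<Rightarrow> bool" where
  "oiso f k A \<longleftrightarrow> bij_betw f {..<k} A \<and> (\<forall>x<k. \<forall>y<k. x < y \<longrightarrow> f x < f y)"

lemma iso_ordr_iff:
  "iso (Restr ordr A) (Restr ordr B) f \<longleftrightarrow>
    bij_betw f A B \<and> (\<forall>x\<in>A. \<forall>y\<in>A. x < y \<longrightarrow> f x < f y)"
  unfolding iso_iff2 Field_Restr_ordr
proof (intro iffI conjI; (elim conjE)?)
  assume b: "bij_betw f A B" and h: "\<forall>a\<in>A. \<forall>b\<in>A. ((a, b) \<in> Restr ordr A) = ((f a, f b) \<in> Restr ordr B)"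
  show "bij_betw f A B" by fact
  show "\<forall>x\<in>A. \<forall>y\<in>A. x < y \<longrightarrow> f x < f y"
  proof (intro ballI impI)
    fix x y assume "x \<in> A" "y \<in> A" "x < y"
    hence "\<not> (y, x) \<in> Restr ordr A" by (auto simp: ordr_def)
    hence "\<not> (f y, f x) \<in> Restr ordr B" using h \<open>x\<in>A\<close> \<open>y\<in>A\<close> by blast
    moreover have "f x \<in> B" "f y \<in> B" using b \<open>x\<in>A\<close> \<open>y\<in>A\<close> by (auto simp: bij_betw_def)
    ultimately show "f x < f y" by (auto simp: ordr_def)
  qed
next
  assume b: "bij_betw f A B" and h: "\<forall>x\<in>A. \<forall>y\<in>A. x < y \<longrightarrow> f x < f y"
  show "bij_betw f A B" by fact
  show "\<forall>a\<in>A. \<forall>b\<in>A. ((a, b) \<in> Restr ordr A) = ((f a, f b) \<in> Restr ordr B)"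
  proof (intro ballI)
    fix x y assume xy: "x \<in> A" "y \<in> A"
    have "f x \<in> B" "f y \<in> B" using b xy by (auto simp: bij_betw_def)
    moreover have "x \<le> y \<longleftrightarrow> f x \<le> f y"
      using h xy by (metis leD leI le_less)
    ultimately show "((x, y) \<in> Restr ordr A) = ((f x, f y) \<in> Restr ordr B)"
      using xy by (auto simp: ordr_def)
  qed
qed

lemma inv_mono_bij:
  fixes f :: "'a::linorder \<Rightarrow> 'b::linorder"
  assumes b: "bij_betw f A B" and h: "\<forall>x\<in>A. \<forall>y\<in>A. x < y \<longrightarrow> f x < f y"
  shows "bij_betw (inv_into A f) B A \<and> (\<forall>x\<in>B. \<forall>y\<in>B. x < y \<longrightarrow> inv_into A f x < inv_into A f y)"
proof
  show "bij_betw (inv_into A f) B A" using b by (rule bij_betw_inv_into)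
  show "\<forall>x\<in>B. \<forall>y\<in>B. x < y \<longrightarrow> inv_into A f x < inv_into A f y"
  proof (intro ballI impI)
    fix x y assume xy: "x \<in> B" "y \<in> B" "x < y"
    have i: "inv_into A f x \<in> A" "inv_into A f y \<in> A" "f (inv_into A f x) = x" "f (inv_into A f y) = y"
      using b xy by (auto simp: bij_betw_def inv_into_into f_inv_into_f)
    show "inv_into A f x < inv_into A f y"
    proof (rule ccontr)
      assume "\<not> ?thesis"
      hence "inv_into A f y \<le> inv_into A f x" by simp
      hence "f (inv_into A f y) \<le> f (inv_into A f x)" using h i by (metis le_less)
      thus False using i xy by simp
    qed
  qed
qed

lemma otp_eq_iff: "otp_eq A k \<longleftrightarrow> (\<exists>f. oiso f k A)"
proof
  assume "otp_eq A k"
  then obtain g where "iso (Restr ordr A) (Restr ordr {..<k}) g"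
    unfolding otp_eq_def ordIso_def by auto
  hence "bij_betw g A {..<k} \<and> (\<forall>x\<in>A. \<forall>y\<in>A. x < y \<longrightarrow> g x < g y)"
    by (simp add: iso_ordr_iff)
  from inv_mono_bij[OF conjunct1[OF this] conjunct2[OF this]]
  show "\<exists>f. oiso f k A" unfolding oiso_def by auto
next
  assume "\<exists>f. oiso f k A"
  then obtain f where f: "bij_betw f {..<k} A" "\<forall>x\<in>{..<k}. \<forall>y\<in>{..<k}. x < y \<longrightarrow> f x < f y"
    unfolding oiso_def by auto
  from inv_mono_bij[OF f]
  have "iso (Restr ordr A) (Restr ordr {..<k}) (inv_into {..<k} f)" by (simp add: iso_ordr_iff)
  thus "otp_eq A k" unfolding otp_eq_def ordIso_def using WO_Restr by auto
qed

lemma incr_ge: 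
  fixes g :: "'a::wellorder \<Rightarrow> 'a"
  assumes "\<forall>x<k. \<forall>y<k. x < y \<longrightarrow> g x < g y" "\<forall>x<k. g x < k'"
  shows "x < k \<Longrightarrow> x \<le> g x"
proof (induction x rule: less_induct)
  case (less x)
  show ?case
  proof (rule ccontr)
    assume "\<not> x \<le> g x"
    hence lt: "g x < x" by simp
    hence "g x < k" using less.prems by simp
    hence "g x \<le> g (g x)" using less.IH lt by blast
    moreover have "g (g x) < g x" using assms(1) lt \<open>g x < k\<close> less.prems by blast
    ultimately show False by simp
  qed
qed

lemma incr_le:
  fixes g :: "'a::wellorder \<Rightarrow> 'a"
  assumes "\<forall>x<k. \<forall>y<k. x < y \<longrightarrow> g x < g y" "\<forall>x<k. g x < k'"
  shows "k \<le> k'"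
proof (rule ccontr)
  assume "\<not> k \<le> k'"
  hence "k' < k" by simp
  hence "k' \<le> g k'" using incr_ge[OF assms] by blast
  moreover have "g k' < k'" using assms(2) \<open>k' < k\<close> by blast
  ultimately show False by simp
qed

lemma oiso_comp_le:
  assumes "oiso f k A" "oiso g k' B" "\<forall>x\<in>A. \<forall>y\<in>A. x < y \<longrightarrow> s x < s y" "s ` A \<subseteq> B"
  shows "k \<le> k'"
proof -
  let ?gi = "inv_into {..<k'} g"
  have gi: "bij_betw ?gi B {..<k'}" "\<forall>x\<in>B. \<forall>y\<in>B. x < y \<longrightarrow> ?gi x < ?gi y"
    using inv_mono_bij[of g "{..<k'}" B] assms(2) unfolding oiso_def by auto
  have fA: "\<forall>x<k. f x \<in> A" using assms(1) unfolding oiso_def bij_betw_def by auto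
  show ?thesis
  proof (rule incr_le[where g = "\<lambda>x. ?gi (s (f x))"])
    show "\<forall>x<k. \<forall>y<k. x < y \<longrightarrow> ?gi (s (f x)) < ?gi (s (f y))"
      using assms(1,3,4) gi(2) fA unfolding oiso_def by (meson image_subset_iff)
    show "\<forall>x<k. ?gi (s (f x)) < k'"
      using gi(1) fA assms(4) unfolding bij_betw_def by blast
  qed
qed

lemma otp_unique: "otp_eq A k \<Longrightarrow> otp_eq A k' \<Longrightarrow> k = k'"
  unfolding otp_eq_iff
  by (metis antisym oiso_comp_le[where s=id] id_apply image_id order_refl)



lemma oiso_id: "oiso id a {..<a}"
  unfolding oiso_def by auto

lemma Restr_ordr_lt: "(a::'a::wellorder) < d \<Longrightarrow> Restr (Restr ordr {..<d}) (underS (Restr ordr {..<d}) a) = Restr ordr {..<a}"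
  unfolding underS_def ordr_def by auto

lemma Restr_ordr_lt2: "a \<in> A \<Longrightarrow> Restr (Restr ordr (A::'a::wellorder set)) (underS (Restr ordr A) a) = Restr ordr (A \<inter> {..<a})"
  unfolding underS_def ordr_def by auto

lemma otp_exists:
  fixes A :: "'a::wellorder set"
  assumes "A \<subseteq> {..<d}"
  shows "\<exists>k\<le>d. otp_eq A k"
proof -
  let ?r = "Restr ordr {..<d}" and ?rA = "Restr ordr A"
  have W: "Well_order ?r" "Well_order ?rA" by (rule WO_Restr)+
  from ordLess_or_ordLeq[OF W]
  show ?thesis
  proof
    assume "(?r, ?rA) \<in> ordLess"
    then obtain a where a: "a \<in> A" "(?r, Restr ?rA (underS ?rA a)) \<in> ordIso"
      using ordLess_iff_ordIso_Restr[OF W(2) W(1)] Field_Restr_ordr by metis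
    hence "otp_eq (A \<inter> {..<a}) d" unfolding otp_eq_def using Restr_ordr_lt2[OF a(1)]
      using ordIso_symmetric by metis
    then obtain f where f: "oiso f d (A \<inter> {..<a})" by (auto simp: otp_eq_iff)
    have "d \<le> a" by (rule oiso_comp_le[OF f oiso_id, where s=id]) auto
    with a assms show ?thesis by auto
  next
    assume "(?rA, ?r) \<in> ordLeq"
    hence "(?rA, ?r) \<in> ordLess \<or> (?rA, ?r) \<in> ordIso" using ordLeq_iff_ordLess_or_ordIso by blast
    thus ?thesis
    proof
      assume "(?rA, ?r) \<in> ordIso" thus ?thesis unfolding otp_eq_def by auto
    next
      assume "(?rA, ?r) \<in> ordLess"
      then obtain a where a: "a \<in> {..<d}" "(?rA, Restr ?r (underS ?r a)) \<in> ordIso"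
        using ordLess_iff_ordIso_Restr[OF W(1) W(2)] Field_Restr_ordr by metis
      hence "otp_eq A a" unfolding otp_eq_def using Restr_ordr_lt[of a d] by auto
      thus ?thesis using a by (auto intro: less_imp_le)
    qed
  qed
qed

lemma otp_less_ex:
  fixes A :: "'a::wellorder set"
  assumes "A \<subseteq> {..<d}" "otp_less A d"
  shows "\<exists>k<d. otp_eq A k"
proof -
  obtain k where k: "k \<le> d" "otp_eq A k" using otp_exists[OF assms(1)] by auto
  have "k \<noteq> d" using k assms(2) not_ordLess_ordIso unfolding otp_eq_def otp_less_def by blast
  with k show ?thesis using order_le_neq_trans by blast
qed

definition ot :: "'a::wellorder set \<Rightarrow> 'a" where
  "ot A = (LEAST k. otp_eq A k)"

lemma ot_eq: "otp_eq A k \<Longrightarrow> ot A = k"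
  unfolding ot_def by (metis LeastI otp_unique)

lemma cof_le: "cofinal_in A d \<Longrightarrow> otp_eq A k \<Longrightarrow> cof d \<le> k"
  unfolding cof_def by (rule Least_le) blast

lemma cof_wit: "\<exists>A. cofinal_in A d \<and> otp_eq A (cof d)"
proof -
  have "cofinal_in {..<d} d \<and> otp_eq {..<d} d"
    unfolding cofinal_in_def otp_eq_iff using oiso_id by auto
  hence "\<exists>k A. cofinal_in A d \<and> otp_eq A k" by blast
  from LeastI_ex[OF this] show ?thesis unfolding cof_def .
qed

lemma uncountable_chi:
  assumes "regular_uncountable_cardinal (chi::'a::wellorder)"
  shows "\<not> countable {..<chi}"
proof
  assume "countable {..<chi}"
  hence "(card_of {..<chi}, card_of (UNIV::nat set)) \<in> ordLeq" using countable_card_of_nat by blast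
  moreover have "(card_of (UNIV::nat set), card_of {..<chi}) \<in> ordLess"
    using assms unfolding regular_uncountable_cardinal_def by blast
  ultimately show False using not_ordLess_ordLeq by blast
qed

lemma countable_otp_small:
  assumes "\<not> countable {..<(chi::'a::wellorder)}" "otp_eq A k" "countable A"
  shows "k < chi"
proof (rule ccontr)
  assume "\<not> k < chi"
  obtain f where "oiso f k A" using assms(2) otp_eq_iff by blast
  hence "bij_betw f {..<k} A" unfolding oiso_def by auto
  hence "countable {..<k}" using assms(3) by (metis bij_betw_imp_inj_on countable_image_inj_on bij_betw_imp_surj_on)
  moreover have "{..<chi} \<subseteq> {..<k}" using \<open>\<not> k < chi\<close> by auto
  ultimately show False using assms(1) countable_subset by blast
qed

lemma countable_bounded:
  assumes "\<not> countable {..<(chi::'a::wellorder)}" "cof d = chi" "S \<subseteq> {..<d}" "countable S"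
  shows "\<exists>b<d. \<forall>s\<in>S. s < b"
proof (rule ccontr)
  assume "\<not> ?thesis"
  hence "cofinal_in S d" using assms(3) unfolding cofinal_in_def by (metis leD not_less)
  moreover obtain k where "otp_eq S k" using otp_exists[OF assms(3)] by auto
  ultimately have "cof d \<le> k" "k < chi" using cof_le countable_otp_small[OF assms(1) _ assms(4)] by auto
  with assms(2) show False by simp
qed


definition hrec :: "'a::wellorder \<Rightarrow> ('a \<Rightarrow> 'a set) \<Rightarrow> 'a \<Rightarrow> 'a" where
  "hrec chi C = wfrec {(x,y). x < y}
     (\<lambda>f x. if sq_dom chi x \<and> ot (C x) < x then f (ot (C x)) else (if x < chi then x else (LEAST z. True)))"

lemma hrec_unfold: "hrec chi C x =
  (if sq_dom chi x \<and> ot (C x) < x then hrec chi C (ot (C x)) else (if x < chi then x else (LEAST z. True)))"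
  unfolding hrec_def by (subst wfrec[OF wf]) (simp add: cut_apply)
lemma sup_acc:
  fixes x :: "nat \<Rightarrow> 'a::wellorder"
  assumes "\<forall>n. x n \<in> X" "\<forall>n. x n < x (Suc n)" "\<forall>n. x n \<le> u"
  shows "(LEAST u. \<forall>n. x n \<le> u) \<le> u \<and> (\<forall>n. x n \<le> (LEAST u. \<forall>n. x n \<le> u)) \<and> acc_pt X (LEAST u. \<forall>n. x n \<le> u)"
proof -
  let ?s = "LEAST u. \<forall>n. x n \<le> u"
  have 1: "?s \<le> u" using assms(3) by (rule Least_le)
  have 2: "\<forall>n. x n \<le> ?s" using assms(3) by (rule LeastI)
  have 3: "acc_pt X ?s"
    unfolding acc_pt_def
  proof (intro conjI allI impI)
    show "\<exists>c\<in>X. c < ?s" using assms(1,2) 2 by (meson less_le_trans)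
    fix b assume "b < ?s"
    hence "\<not> (\<forall>n. x n \<le> b)" using Least_le[of "\<lambda>u. \<forall>n. x n \<le> u" b] leD by blast
    then obtain n where "b < x n" by (auto simp: not_le)
    moreover have "x n < ?s" using assms(2) 2 by (meson less_le_trans)
    ultimately show "\<exists>c\<in>X. b < c \<and> c < ?s" using assms(1) by blast
  qed
  show ?thesis using 1 2 3 by blast
qed

definition Qp :: "'a::wellorder \<Rightarrow> 'a \<Rightarrow> bool" where
  "Qp chi d \<longleftrightarrow> (\<forall>S. S \<subseteq> {..<d} \<longrightarrow> countable S \<longrightarrow> (\<exists>b<d. \<forall>s\<in>S. s < b)) \<and> cof d \<le> chi"

lemma Qp_limit: "Qp chi d \<Longrightarrow> limit_ord d"
  unfolding limit_ord_def Qp_def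
proof (intro conjI allI impI; (elim conjE)?)
  assume q: "\<forall>S. S \<subseteq> {..<d} \<longrightarrow> countable S \<longrightarrow> (\<exists>b<d. \<forall>s\<in>S. s < b)"
  show "\<exists>b. b < d" using q[rule_format, of "{}"] by auto
  fix b assume "b < d"
  thus "\<exists>c<d. b < c" using q[rule_format, of "{b}"] by auto
qed


context
  fixes chi :: "'a::wellorder" and C :: "'a \<Rightarrow> 'a set"
  assumes unc: "\<not> countable {..<chi}"
    and sq: "\<forall>a. sq_dom chi a \<longrightarrow> club_in (C a) a \<and> otp_less (C a) a \<and>
        (\<forall>d. acc_pt (C a) d \<longrightarrow> sq_dom chi d \<and> C d = C a \<inter> {..<d})"
begin

lemma h_lt: "hrec chi C x < chi"
proof (induction x rule: less_induct)
  case (less x)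
  have "{..<chi} \<noteq> {}" using unc countable_empty by metis
  then obtain z where "z < chi" by auto
  moreover have "(LEAST z::'a. True) \<le> z" by (rule Least_le) simp
  ultimately have m: "(LEAST z::'a. True) < chi" by simp
  show ?case by (subst hrec_unfold) (use less m in auto)
qed

lemma h_small: "x < chi \<Longrightarrow> hrec chi C x = x"
  by (subst hrec_unfold) (auto simp: sq_dom_def)

lemma h_dom: assumes "sq_dom chi x" shows "hrec chi C x = hrec chi C (ot (C x))"
proof -
  have "club_in (C x) x" "otp_less (C x) x" using sq[rule_format, OF assms] by auto
  hence "C x \<subseteq> {..<x}" "otp_less (C x) x" unfolding club_in_def cofinal_in_def by auto
  then obtain k where "k < x" "otp_eq (C x) k" using otp_less_ex by blast
  hence "ot (C x) < x" using ot_eq by metis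
  thus ?thesis using assms by (subst hrec_unfold) simp
qed

lemma main_step: "Qp chi d \<Longrightarrow> \<exists>E. club_in E d \<and> (\<forall>x\<in>E. \<forall>y\<in>E. x < y \<longrightarrow> hrec chi C x < hrec chi C y)"
proof (induction d rule: less_induct)
  case (less \<delta>)
  show ?case
  proof (cases "\<delta> \<le> chi")
    case True
    have "club_in {..<\<delta>} \<delta>" unfolding club_in_def cofinal_in_def by auto
    moreover have "\<forall>x\<in>{..<\<delta>}. \<forall>y\<in>{..<\<delta>}. x < y \<longrightarrow> hrec chi C x < hrec chi C y"
    proof (intro ballI impI)
      fix x y assume "x \<in> {..<\<delta>}" "y \<in> {..<\<delta>}" "x < y"
      hence "x < chi" "y < chi" using True by auto
      thus "hrec chi C x < hrec chi C y" using h_small \<open>x < y\<close> by simp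
    qed
    ultimately show ?thesis by blast
  next
    case False
    hence chi_lt: "chi < \<delta>" by simp
    have lim: "limit_ord \<delta>" using Qp_limit less.prems .
    have cofd: "cof \<delta> \<le> chi" using less.prems unfolding Qp_def by blast
    have sqd: "sq_dom chi \<delta>" unfolding sq_dom_def using lim cofd chi_lt by auto
    note SQ = sq[rule_format, OF sqd]
    have clubd: "club_in (C \<delta>) \<delta>" using SQ by (rule conjunct1)
    have otl: "otp_less (C \<delta>) \<delta>" using SQ by blast
    have coh: "\<And>d. acc_pt (C \<delta>) d \<Longrightarrow> sq_dom chi d \<and> C d = C \<delta> \<inter> {..<d}"
      using SQ[THEN conjunct2, THEN conjunct2] by blast
    have Csub: "C \<delta> \<subseteq> {..<\<delta>}" using clubd unfolding club_in_def cofinal_in_def by blast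
    have Ccof: "\<And>b. b < \<delta> \<Longrightarrow> \<exists>c\<in>C \<delta>. b \<le> c" using clubd unfolding club_in_def cofinal_in_def by blast
    have Ccl: "\<And>g. g < \<delta> \<Longrightarrow> acc_pt (C \<delta>) g \<Longrightarrow> g \<in> C \<delta>" using clubd unfolding club_in_def by blast
    obtain \<epsilon> where elt: "\<epsilon> < \<delta>" and oe: "otp_eq (C \<delta>) \<epsilon>" using otp_less_ex[OF Csub otl] by blast
    obtain \<pi> where pi: "oiso \<pi> \<epsilon> (C \<delta>)" using oe otp_eq_iff by blast
    have pi_in: "\<And>e. e < \<epsilon> \<Longrightarrow> \<pi> e \<in> C \<delta>" using pi unfolding oiso_def bij_betw_def by auto
    have pim: "\<forall>x<\<epsilon>. \<forall>y<\<epsilon>. x < y \<longrightarrow> \<pi> x < \<pi> y" using pi unfolding oiso_def by blast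
    have pi_lt: "(\<pi> e < \<pi> e') = (e < e')" if "e < \<epsilon>" "e' < \<epsilon>" for e e'
    proof (cases e e' rule: linorder_cases)
      case less thus ?thesis using pim that by blast
    next
      case equal thus ?thesis by simp
    next
      case greater
      hence "\<pi> e' < \<pi> e" using pim that by blast
      thus ?thesis using greater less_asym by blast
    qed
    have pi_le: "(\<pi> e \<le> \<pi> e') = (e \<le> e')" if "e < \<epsilon>" "e' < \<epsilon>" for e e'
    proof -
      have "(\<not> \<pi> e' < \<pi> e) = (\<not> e' < e)" using pi_lt[OF that(2) that(1)] by simp
      thus ?thesis by (simp add: not_less)
    qed
    have pi_onto: "\<exists>e<\<epsilon>. \<pi> e = c" if "c \<in> C \<delta>" for c
    proof -
      have "\<pi> ` {..<\<epsilon>} = C \<delta>" using pi unfolding oiso_def bij_betw_def by blast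
      thus ?thesis using that by force
    qed
    have pi_dl: "\<And>e. e < \<epsilon> \<Longrightarrow> \<pi> e < \<delta>" using pi_in Csub by blast
    have Qe: "Qp chi \<epsilon>"
      unfolding Qp_def
    proof (intro conjI allI impI)
      fix S assume SS: "S \<subseteq> {..<\<epsilon>}" "countable S"
      have "\<pi> ` S \<subseteq> {..<\<delta>}" using SS pi_dl by auto
      moreover have "countable (\<pi> ` S)" using SS by auto
      ultimately obtain b where b: "b < \<delta>" "\<forall>s\<in>\<pi> ` S. s < b"
        using less.prems unfolding Qp_def by blast
      obtain c where c: "c \<in> C \<delta>" "b \<le> c" using Ccof b(1) by blast
      obtain e where e: "e < \<epsilon>" "\<pi> e = c" using pi_onto c(1) by blast
      have "\<forall>s\<in>S. s < e"
      proof
        fix s assume "s \<in> S"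
        hence "\<pi> s < \<pi> e" using b c e by force
        thus "s < e" using pi_lt SS \<open>s \<in> S\<close> e by auto
      qed
      thus "\<exists>b<\<epsilon>. \<forall>s\<in>S. s < b" using e by blast
    next
      obtain A where A: "cofinal_in A \<delta>" "otp_eq A (cof \<delta>)" using cof_wit by blast
      define \<mu> where "\<mu> a = (LEAST e. e < \<epsilon> \<and> a \<le> \<pi> e)" for a
      have mu1: "\<mu> a < \<epsilon> \<and> a \<le> \<pi> (\<mu> a)" if "a \<in> A" for a
      proof -
        have "a < \<delta>" using A that unfolding cofinal_in_def by auto
        then obtain c where "c \<in> C \<delta>" "a \<le> c" using Ccof by blast
        then obtain e where "e < \<epsilon>" "a \<le> \<pi> e" using pi_onto by blast
        hence "e < \<epsilon> \<and> a \<le> \<pi> e" by simp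
        thus ?thesis unfolding \<mu>_def by (rule LeastI)
      qed
      have mu2: "\<mu> a \<le> e" if "e < \<epsilon>" "a \<le> \<pi> e" for a e
        unfolding \<mu>_def using that by (intro Least_le) simp
      have mumono: "\<mu> a \<le> \<mu> a'" if "a \<in> A" "a' \<in> A" "a \<le> a'" for a a'
        using mu2[of "\<mu> a'" a] mu1[OF that(2)] that(3) by auto
      define B where "B = \<mu> ` A"
      have Bsub: "B \<subseteq> {..<\<epsilon>}" using mu1 B_def by auto
      have Bcof: "cofinal_in B \<epsilon>"
        unfolding cofinal_in_def
      proof (intro conjI allI impI)
        show "B \<subseteq> {..<\<epsilon>}" by fact
        fix b assume "b < \<epsilon>"
        hence "\<pi> b < \<delta>" using pi_dl by auto
        then obtain a where a: "a \<in> A" "\<pi> b \<le> a" using A(1) unfolding cofinal_in_def by auto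
        hence "\<pi> b \<le> \<pi> (\<mu> a)" using mu1 by (meson order_trans)
        hence "b \<le> \<mu> a" using pi_le \<open>b < \<epsilon>\<close> mu1 a by auto
        thus "\<exists>x\<in>B. b \<le> x" using a B_def by auto
      qed
      define \<sigma> where "\<sigma> b = (LEAST a. a \<in> A \<and> \<mu> a = b)" for b
      have sig1: "\<sigma> b \<in> A \<and> \<mu> (\<sigma> b) = b" if bB: "b \<in> B" for b
      proof -
        obtain a where "a \<in> A" "\<mu> a = b" using bB B_def by auto
        hence "a \<in> A \<and> \<mu> a = b" by simp
        thus ?thesis unfolding \<sigma>_def by (rule LeastI)
      qed
      have sigmono: "\<forall>x\<in>B. \<forall>y\<in>B. x < y \<longrightarrow> \<sigma> x < \<sigma> y"
      proof (intro ballI impI)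
        fix x y assume xy: "x \<in> B" "y \<in> B" "x < y"
        show "\<sigma> x < \<sigma> y"
        proof (rule ccontr)
          assume "\<not> \<sigma> x < \<sigma> y"
          hence "\<sigma> y \<le> \<sigma> x" by simp
          hence "\<mu> (\<sigma> y) \<le> \<mu> (\<sigma> x)" using mumono sig1 xy by blast
          thus False using sig1 xy by auto
        qed
      qed
      obtain k' where k': "otp_eq B k'" using otp_exists[OF Bsub] by blast
      obtain \<phi> where phi: "oiso \<phi> k' B" using k' otp_eq_iff by blast
      obtain \<psi> where psi: "oiso \<psi> (cof \<delta>) A" using A(2) otp_eq_iff by blast
      have "k' \<le> cof \<delta>" by (rule oiso_comp_le[OF phi psi sigmono]) (use sig1 in blast)
      moreover have "cof \<epsilon> \<le> k'" using cof_le[OF Bcof k'] .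
      ultimately show "cof \<epsilon> \<le> chi" using cofd by simp
    qed
    obtain E0 where E0: "club_in E0 \<epsilon>"
      and hE0: "\<forall>x\<in>E0. \<forall>y\<in>E0. x < y \<longrightarrow> hrec chi C x < hrec chi C y"
      using less.IH[OF elt Qe] by blast
    have lime: "limit_ord \<epsilon>" using Qp_limit[OF Qe] .
    have E0sub: "E0 \<subseteq> {..<\<epsilon>}" using E0 unfolding club_in_def cofinal_in_def by blast
    have E0cof: "\<And>b. b < \<epsilon> \<Longrightarrow> \<exists>e\<in>E0. b \<le> e" using E0 unfolding club_in_def cofinal_in_def by blast
    have E0cl: "\<And>g. g < \<epsilon> \<Longrightarrow> acc_pt E0 g \<Longrightarrow> g \<in> E0" using E0 unfolding club_in_def by blast
    have E0unb: "\<exists>e. e \<in> E0 \<and> x < e" if xe: "x < \<epsilon>" for x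
    proof -
      have "\<forall>b<\<epsilon>. \<exists>c<\<epsilon>. b < c" using lime unfolding limit_ord_def by (rule conjunct2)
      then obtain y where y: "y < \<epsilon>" "x < y" using xe by blast
      then obtain e where e: "e \<in> E0" "y \<le> e" using E0cof by blast
      have "x < e" using y(2) e(2) by simp
      thus ?thesis using e(1) by blast
    qed
    have hpi: "hrec chi C (\<pi> e) = hrec chi C e" if "e < \<epsilon>" "acc_pt (C \<delta>) (\<pi> e)" for e
    proof -
      have cohe: "sq_dom chi (\<pi> e) \<and> C (\<pi> e) = C \<delta> \<inter> {..<\<pi> e}" using coh[OF that(2)] .
      have sd: "sq_dom chi (\<pi> e)" using cohe by (rule conjunct1)
      have Ce: "C (\<pi> e) = C \<delta> \<inter> {..<\<pi> e}" using cohe by (rule conjunct2)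
      have lte: "\<And>x. x < e \<Longrightarrow> x < \<epsilon>" using that(1) by (meson less_trans)
      have "oiso \<pi> e (C \<delta> \<inter> {..<\<pi> e})"
        unfolding oiso_def bij_betw_def
      proof (intro conjI)
        show "inj_on \<pi> {..<e}"
        proof (rule inj_onI)
          fix x y assume xy: "x \<in> {..<e}" "y \<in> {..<e}" "\<pi> x = \<pi> y"
          have xe: "x < \<epsilon>" "y < \<epsilon>" using xy lte by auto
          show "x = y"
          proof (rule ccontr)
            assume "x \<noteq> y"
            hence "x < y \<or> y < x" by (rule neq_iff[THEN iffD1])
            hence "\<pi> x < \<pi> y \<or> \<pi> y < \<pi> x" using pim xe by blast
            thus False using xy(3) by simp
          qed
        qed
        show "\<pi> ` {..<e} = C \<delta> \<inter> {..<\<pi> e}"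
        proof
          show "\<pi> ` {..<e} \<subseteq> C \<delta> \<inter> {..<\<pi> e}"
          proof
            fix c assume "c \<in> \<pi> ` {..<e}"
            then obtain x where x: "x < e" "c = \<pi> x" by blast
            have "\<pi> x \<in> C \<delta>" using pi_in lte x(1) by blast
            moreover have "\<pi> x < \<pi> e" using pim lte x(1) that(1) by blast
            ultimately show "c \<in> C \<delta> \<inter> {..<\<pi> e}" using x(2) by simp
          qed
          show "C \<delta> \<inter> {..<\<pi> e} \<subseteq> \<pi> ` {..<e}"
          proof
            fix c assume c: "c \<in> C \<delta> \<inter> {..<\<pi> e}"
            then obtain e' where e': "e' < \<epsilon>" "\<pi> e' = c" using pi_onto by blast
            have "c < \<pi> e" using c by simp
            hence "e' < e" using pi_lt[OF e'(1) that(1)] e'(2) by simp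
            thus "c \<in> \<pi> ` {..<e}" using e'(2) by blast
          qed
        qed
        show "\<forall>x<e. \<forall>y<e. x < y \<longrightarrow> \<pi> x < \<pi> y"
        proof (intro allI impI)
          fix x y assume "x < e" "y < e" "x < y"
          thus "\<pi> x < \<pi> y" using pim lte by blast
        qed
      qed
      hence "otp_eq (C (\<pi> e)) e" unfolding Ce otp_eq_iff by blast
      hence "ot (C (\<pi> e)) = e" by (rule ot_eq)
      thus ?thesis using h_dom[OF sd] by simp
    qed
    define D where "D = \<pi> ` {e \<in> E0. acc_pt (C \<delta>) (\<pi> e)}"
    have Dsub: "D \<subseteq> C \<delta>" using D_def pi_in E0sub by auto
    have "club_in D \<delta>"
      unfolding club_in_def cofinal_in_def
    proof (intro conjI allI impI)
      show "D \<subseteq> {..<\<delta>}" using Dsub Csub by auto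
    next
      fix b assume "b < \<delta>"
      then obtain c where "c \<in> C \<delta>" "b \<le> c" using Ccof by blast
      then obtain e1 where e1: "e1 < \<epsilon>" "b \<le> \<pi> e1" using pi_onto by blast
      have step: "(LEAST e. e \<in> E0 \<and> p < e) \<in> E0 \<and> p < (LEAST e. e \<in> E0 \<and> p < e)" if pe: "p < \<epsilon>" for p
      proof -
        obtain e where "e \<in> E0 \<and> p < e" using E0unb[OF pe] by blast
        thus ?thesis by (rule LeastI)
      qed
      define xs where "xs = rec_nat (LEAST e. e \<in> E0 \<and> e1 < e) (\<lambda>n p. LEAST e. e \<in> E0 \<and> p < e)"
      have xs0: "xs 0 = (LEAST e. e \<in> E0 \<and> e1 < e)" unfolding xs_def by simp
      have xsS: "\<And>n. xs (Suc n) = (LEAST e. e \<in> E0 \<and> xs n < e)" unfolding xs_def by simp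
      have xsin: "\<forall>n. xs n \<in> E0"
      proof
        fix n show "xs n \<in> E0"
        proof (induction n)
          case 0 thus ?case using step[OF e1(1)] xs0 by simp
        next
          case (Suc n)
          hence "xs n < \<epsilon>" using E0sub by auto
          thus ?case using step xsS by simp
        qed
      qed
      have xslt: "\<forall>n. xs n < xs (Suc n)"
      proof
        fix n
        have "xs n < \<epsilon>" using xsin E0sub by auto
        thus "xs n < xs (Suc n)" using step xsS by simp
      qed
      have xs0gt: "e1 < xs 0" using step[OF e1(1)] xs0 by simp
      have "range xs \<subseteq> {..<\<epsilon>}" using xsin E0sub by auto
      moreover have "countable (range xs)" by simp
      ultimately obtain u where u: "u < \<epsilon>" "\<forall>s\<in>range xs. s < u" using Qe unfolding Qp_def by blast
      define s where "s = (LEAST u. \<forall>n. xs n \<le> u)"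
      have "\<forall>n. xs n \<le> u" using u by (auto intro: less_imp_le)
      from sup_acc[OF xsin xslt this] have s: "s \<le> u" "\<forall>n. xs n \<le> s" "acc_pt E0 s"
        unfolding s_def[symmetric] by auto
      have se: "s < \<epsilon>" using s u by simp
      have sE: "s \<in> E0" using E0cl se s by blast
      have xse: "\<And>n. xs n < \<epsilon>" using xsin E0sub by auto
      have p1: "\<forall>n. \<pi> (xs n) \<in> C \<delta>" using pi_in xse by blast
      have p2: "\<forall>n. \<pi> (xs n) < \<pi> (xs (Suc n))" using pi_lt xse xslt by blast
      have p3: "\<forall>n. \<pi> (xs n) \<le> \<pi> s" using pi_le xse se s by blast
      define t where "t = (LEAST u. \<forall>n. \<pi> (xs n) \<le> u)"
      from sup_acc[OF p1 p2 p3] have t: "t \<le> \<pi> s" "\<forall>n. \<pi> (xs n) \<le> t" "acc_pt (C \<delta>) t"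
        unfolding t_def[symmetric] by auto
      have "t < \<delta>" using t pi_dl[OF se] by (meson le_less_trans)
      hence "t \<in> C \<delta>" using Ccl t by blast
      then obtain e' where e': "e' < \<epsilon>" "\<pi> e' = t" using pi_onto by blast
      have "\<forall>n. xs n \<le> e'"
      proof
        fix n
        have "\<pi> (xs n) \<le> \<pi> e'" using t e' by simp
        thus "xs n \<le> e'" using pi_le[OF xse e'(1)] by simp
      qed
      hence "s \<le> e'" unfolding s_def by (rule Least_le)
      hence "\<pi> s \<le> \<pi> e'" using pi_le e' se by auto
      hence "t = \<pi> s" using t e' by auto
      hence acc: "acc_pt (C \<delta>) (\<pi> s)" using t by simp
      have "\<pi> s \<in> D" using D_def sE acc by auto
      moreover have "b \<le> \<pi> s"
      proof -
        have "\<pi> e1 < \<pi> (xs 0)" using pi_lt e1(1) xse xs0gt by blast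
        moreover have "\<pi> (xs 0) \<le> \<pi> s" using p3 by blast
        ultimately show ?thesis using e1(2) by simp
      qed
      ultimately show "\<exists>x\<in>D. b \<le> x" by blast
    next
      fix g assume g: "g < \<delta>" "acc_pt D g"
      have accg: "acc_pt (C \<delta>) g" using g(2) Dsub unfolding acc_pt_def by blast
      hence "g \<in> C \<delta>" using Ccl g(1) by blast
      then obtain e0 where e0: "e0 < \<epsilon>" "\<pi> e0 = g" using pi_onto by blast
      have "acc_pt E0 e0"
        unfolding acc_pt_def
      proof (intro conjI allI impI)
        obtain d where "d \<in> D" "d < g" using g(2) unfolding acc_pt_def by blast
        then obtain e where "e \<in> E0" "\<pi> e = d" unfolding D_def by blast
        moreover have "e < \<epsilon>" using \<open>e \<in> E0\<close> E0sub by blast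
        ultimately have "e < e0" using pi_lt[OF _ e0(1)] e0(2) \<open>d < g\<close> by blast
        thus "\<exists>c\<in>E0. c < e0" using \<open>e \<in> E0\<close> by blast
      next
        fix b assume "b < e0"
        have be: "b < \<epsilon>" using \<open>b < e0\<close> e0(1) by (meson less_trans)
        have "\<pi> b < g" using pi_lt[OF be e0(1)] \<open>b < e0\<close> e0(2) by simp
        then obtain d where d: "d \<in> D" "\<pi> b < d" "d < g" using g(2) unfolding acc_pt_def by blast
        from d(1) obtain e where e: "e \<in> E0" "\<pi> e = d" unfolding D_def by blast
        have ee: "e < \<epsilon>" using e(1) E0sub by blast
        have "b < e" using pi_lt[OF be ee] d(2) e(2) by simp
        moreover have "e < e0" using pi_lt[OF ee e0(1)] d(3) e(2) e0(2) by simp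
        ultimately have "b < e" "e < e0" by auto
        thus "\<exists>c\<in>E0. b < c \<and> c < e0" using \<open>e \<in> E0\<close> by blast
      qed
      hence "e0 \<in> E0" using E0cl e0 by blast
      thus "g \<in> D" using D_def e0 accg by auto
    qed
    moreover have "\<forall>x\<in>D. \<forall>y\<in>D. x < y \<longrightarrow> hrec chi C x < hrec chi C y"
    proof (intro ballI impI)
      fix x y assume "x \<in> D" "y \<in> D" "x < y"
      then obtain e e' where ee: "e \<in> E0" "acc_pt (C \<delta>) (\<pi> e)" "x = \<pi> e"
        "e' \<in> E0" "acc_pt (C \<delta>) (\<pi> e')" "y = \<pi> e'" using D_def by auto
      have "e < \<epsilon>" "e' < \<epsilon>" using ee E0sub by auto
      hence "e < e'" using pi_lt ee \<open>x < y\<close> by blast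
      hence "hrec chi C e < hrec chi C e'" using hE0 ee by blast
      thus "hrec chi C x < hrec chi C y" using hpi ee \<open>e < \<epsilon>\<close> \<open>e' < \<epsilon>\<close> by simp
    qed
    ultimately show ?thesis by blast
  qed
qed

end


theorem theorem1p7:
  fixes chi :: "'a::wellorder"
  assumes "theta_regular_cardinal TYPE('a)"
    and "regular_uncountable_cardinal chi"
    and "square chi"
  shows "strong_nonreflection chi"
proof -
  obtain C :: "'a \<Rightarrow> 'a set" where sqC: "\<forall>a. sq_dom chi a \<longrightarrow> club_in (C a) a \<and> otp_less (C a) a \<and>
        (\<forall>d. acc_pt (C a) d \<longrightarrow> sq_dom chi d \<and> C d = C a \<inter> {..<d})"
    using assms(3) unfolding square_def by blast
  have unc: "\<not> countable {..<chi}" using uncountable_chi[OF assms(2)] .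
  show ?thesis unfolding strong_nonreflection_def
  proof (intro exI[of _ "hrec chi C"] conjI allI impI)
    fix x show "hrec chi C x < chi" using h_lt[OF unc sqC] .
  next
    fix d assume cd: "cof d = chi"
    have "Qp chi d" unfolding Qp_def using countable_bounded[OF unc cd] cd by auto
    thus "\<exists>E. club_in E d \<and> (\<forall>x\<in>E. \<forall>y\<in>E. x < y \<longrightarrow> hrec chi C x < hrec chi C y)"
      using main_step[OF unc sqC] by blast
  qed
qed

end
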